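(* Let $G$ be a finite group whose order is divisible by at least three distinct primes. If $x,y\in\Sigma(G)$, then $d(x,y)\leq 2$, where $d$ is the distance in $\Gamma(G)$.
   Context: For a finite group $G$, let $\widetilde{\Gamma}(G)$ be the graph with vertex set $G$ in which two distinct elements $x,y$ are adjacent if and only if $|\langle x,y\rangle|$ is divisible by at least three distinct primes; $\Gamma(G)$ is the subgraph obtained by deleting the isolated vertices, and $d(x,y)$ denotes the distance between vertices $x,y$ of $\Gamma(G)$. $\Sigma(G)$ denotes the set of elements $g\in G$ whose order is divisible by at least two distinct primes. *)

theory Defs
  imports "HOL-Computational_Algebra.Primes" "HOL-Algebra.Multiplicative_Group" "HOL-Algebra.Generated_Groups"
begin

definition num_prime_divs :: "nat \<Rightarrow> nat" where
  "num_prime_divs n = card {p::nat. prime p \<and> p dvd n}"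

definition gamma_adj :: "('a, 'b) monoid_scheme \<Rightarrow> 'a \<Rightarrow> 'a \<Rightarrow> bool" where
  "gamma_adj G x y \<longleftrightarrow> x \<in> carrier G \<and> y \<in> carrier G \<and> x \<noteq> y \<and>
     num_prime_divs (card (generate G {x, y})) \<ge> 3"

definition gamma_vertices :: "('a, 'b) monoid_scheme \<Rightarrow> 'a set" where
  "gamma_vertices G = {x \<in> carrier G. \<exists>y. gamma_adj G x y}"

definition gamma_walk :: "('a, 'b) monoid_scheme \<Rightarrow> 'a \<Rightarrow> 'a \<Rightarrow> nat \<Rightarrow> bool" where
  "gamma_walk G x y n \<longleftrightarrow> (\<exists>xs. xs \<noteq> [] \<and> hd xs = x \<and> last xs = y \<and> length xs = Suc n \<and>
     set xs \<subseteq> gamma_vertices G \<and> successively (gamma_adj G) xs)"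

definition gamma_dist_le :: "('a, 'b) monoid_scheme \<Rightarrow> 'a \<Rightarrow> 'a \<Rightarrow> nat \<Rightarrow> bool" where
  "gamma_dist_le G x y n \<longleftrightarrow> x \<in> gamma_vertices G \<and> y \<in> gamma_vertices G \<and>
     (\<exists>k\<le>n. gamma_walk G x y k)"

definition Sigma_set :: "('a, 'b) monoid_scheme \<Rightarrow> 'a set" where
  "Sigma_set G = {g \<in> carrier G. num_prime_divs (group.ord G g) \<ge> 2}"

end

theory Submission
  imports Defs "HOL-Algebra.Sylow"
begin

definition pd :: "nat \<Rightarrow> nat set" where
  "pd n = {p. prime p \<and> p dvd n}"

lemma pd_finite: "n > 0 \<Longrightarrow> finite (pd n)"
  unfolding pd_def by (rule finite_subset[of _ "{..n}"]) (auto dest: dvd_imp_le)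

lemma npd: "num_prime_divs n = card (pd n)"
  unfolding num_prime_divs_def pd_def by simp

lemma pd_mono: "m dvd n \<Longrightarrow> pd m \<subseteq> pd n"
  unfolding pd_def using dvd_trans by blast

lemma sub_dvd:
  assumes "group G" "finite (carrier G)" "subgroup I G" "subgroup J G" "I \<subseteq> J"
  shows "card I dvd card J"
proof -
  interpret group G by fact
  have s: "subgroup I (G\<lparr>carrier := J\<rparr>)" using subgroup_incl assms by blast
  have g: "group (G\<lparr>carrier := J\<rparr>)" using subgroup.subgroup_is_group[OF assms(4)] assms(1) by blast
  have "card (rcosets\<^bsub>G\<lparr>carrier := J\<rparr>\<^esub> I) * card I = order (G\<lparr>carrier := J\<rparr>)"
    using group.lagrange[OF g s] .
  then show ?thesis unfolding order_def by (metis dvd_triv_right partial_object.select_convs(1) partial_object.surjective partial_object.update_convs(1))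
qed

lemma ord_dvd_gen:
  assumes "group G" "finite (carrier G)" "a \<in> carrier G" "z \<in> carrier G"
  shows "group.ord G a dvd card (generate G {a, z})"
proof -
  interpret group G by fact
  have "group.ord G a = card (generate G {a})" using generate_pow_card assms by blast
  moreover have "generate G {a} \<subseteq> generate G {a, z}"
    by (rule mono_generate) auto
  moreover have "subgroup (generate G {a}) G" "subgroup (generate G {a,z}) G"
    using generate_is_subgroup assms by auto
  ultimately show ?thesis using sub_dvd assms by metis
qed

lemma adj_lemma:
  assumes "group G" "finite (carrier G)" "a \<in> carrier G" "z \<in> carrier G" "a \<noteq> z"
    and "3 \<le> card (pd (group.ord G a) \<union> pd (group.ord G z))"
  shows "gamma_adj G a z"
proof -
  interpret group G by fact
  let ?H = "generate G {a, z}"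
  have sg: "subgroup ?H G" using generate_is_subgroup assms by auto
  have "finite ?H" using sg assms(2) subgroup.subset finite_subset by blast
  moreover have "\<one>\<^bsub>G\<^esub> \<in> ?H" using sg subgroup.one_closed by blast
  ultimately have pos: "card ?H > 0" using card_gt_0_iff by blast
  have "generate G {a, z} = generate G {z, a}" by (simp add: insert_commute)
  then have d1: "group.ord G a dvd card ?H" "group.ord G z dvd card ?H"
    using ord_dvd_gen[OF assms(1-4)] ord_dvd_gen[OF assms(1,2,4,3)] by simp_all
  have "pd (group.ord G a) \<union> pd (group.ord G z) \<subseteq> pd (card ?H)"
    using pd_mono d1 by blast
  then have "card (pd (group.ord G a) \<union> pd (group.ord G z)) \<le> card (pd (card ?H))"
    by (rule card_mono[OF pd_finite[OF pos]])
  then show ?thesis unfolding gamma_adj_def npd using assms by simp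
qed

lemma cauchy_elem:
  assumes "group G" "finite (carrier G)" "prime r" "r dvd order G"
  shows "\<exists>z\<in>carrier G. group.ord G z = r"
proof -
  interpret group G by fact
  obtain m where m0: "order G = r * m" using assms(4) by (auto elim: dvdE)
  then have m: "order G = r ^ 1 * m" by simp
  obtain P where P: "subgroup P G" "card P = r" using sylow_thm[OF assms(3,1) m assms(2)] by (auto simp only: power_one_right)
  have "card P > 1" using P assms(3) prime_gt_1_nat by simp
  then obtain g where g: "g \<in> P" "g \<noteq> \<one>\<^bsub>G\<^esub>"
  proof -
    have fP: "finite P" using P(1) assms(2) subgroup.subset finite_subset by blast
    have "\<not> P \<subseteq> {\<one>\<^bsub>G\<^esub>}"
    proof
      assume "P \<subseteq> {\<one>\<^bsub>G\<^esub>}"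
      then have "card P \<le> 1" using card_mono[of "{\<one>\<^bsub>G\<^esub>}" P] by simp
      then show False using \<open>card P > 1\<close> by simp
    qed
    then show ?thesis using that by blast
  qed
  have gc: "g \<in> carrier G" using g P subgroup.subset by blast
  have "generate G {g} \<subseteq> P" using generate_subgroup_incl P g by auto
  then have "card (generate G {g}) dvd card P"
    using sub_dvd[OF assms(1,2) generate_is_subgroup P(1)] gc by simp
  then have "ord g dvd r" using generate_pow_card[OF gc] P by simp
  moreover have "ord g \<noteq> 1" using ord_eq_1 gc g by blast
  ultimately have "ord g = r" using assms(3) prime_nat_iff by blast
  then show ?thesis using gc by blast
qed

theorem lemma2p6:
  fixes G :: "('a, 'b) monoid_scheme"
  assumes "group G" and "finite (carrier G)"
    and "num_prime_divs (order G) \<ge> 3"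
    and "x \<in> Sigma_set G" and "y \<in> Sigma_set G"
  shows "gamma_dist_le G x y 2"
proof -
  interpret group G by fact
  have oG: "order G > 0" unfolding order_def using assms(2) one_closed card_gt_0_iff by blast
  let ?X = "pd (ord x)" and ?Y = "pd (ord y)" and ?P = "pd (order G)"
  have xc: "x \<in> carrier G" and yc: "y \<in> carrier G" using assms(4,5) unfolding Sigma_set_def by auto
  have cX: "card ?X \<ge> 2" and cY: "card ?Y \<ge> 2" using assms(4,5) unfolding Sigma_set_def npd by auto
  have cP: "card ?P \<ge> 3" using assms(3) unfolding npd .
  have XP: "?X \<subseteq> ?P" "?Y \<subseteq> ?P" using pd_mono ord_dvd_group_order xc yc by auto
  have fP: "finite ?P" using pd_finite oG .
  have fXY: "finite (?X \<union> ?Y)" using XP fP finite_subset by blast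
  have adjs: "gamma_adj G a b \<and> gamma_adj G b a" if "a \<in> carrier G" "b \<in> carrier G" "a \<noteq> b"
      "3 \<le> card (pd (ord a) \<union> pd (ord b))" for a b
    using adj_lemma[OF assms(1,2)] that by (metis sup_commute)
  show ?thesis
  proof (cases "\<exists>r\<in>?P. r \<notin> ?X \<union> ?Y")
    case True
    then obtain r where r: "r \<in> ?P" "r \<notin> ?X \<union> ?Y" by blast
    then have rp: "prime r" "r dvd order G" unfolding pd_def by auto
    obtain z where z: "z \<in> carrier G" "ord z = r" using cauchy_elem[OF assms(1,2) rp] by blast
    have rz: "r \<in> pd (ord z)" using z rp unfolding pd_def by auto
    have xz: "x \<noteq> z" and yz: "y \<noteq> z" using r rz by auto
    have "finite ?X" "finite ?Y" using fXY by auto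
    have "card (?X \<union> pd (ord z)) \<ge> card (insert r ?X)"
      by (rule card_mono) (use rz fP pd_finite z rp prime_gt_0_nat \<open>finite ?X\<close> \<open>finite ?Y\<close> in auto)
    then have c1: "card (?X \<union> pd (ord z)) \<ge> 3" using \<open>finite ?X\<close> r cX by simp
    have "card (?Y \<union> pd (ord z)) \<ge> card (insert r ?Y)"
      by (rule card_mono) (use rz fP pd_finite z rp prime_gt_0_nat \<open>finite ?X\<close> \<open>finite ?Y\<close> in auto)
    then have c2: "card (?Y \<union> pd (ord z)) \<ge> 3" using \<open>finite ?Y\<close> r cY by simp
    have a1: "gamma_adj G x z" "gamma_adj G z x" using adjs[OF xc z(1) xz c1] by auto
    have a2: "gamma_adj G y z" "gamma_adj G z y" using adjs[OF yc z(1) yz c2] by auto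
    have v: "x \<in> gamma_vertices G" "y \<in> gamma_vertices G" "z \<in> gamma_vertices G"
      unfolding gamma_vertices_def using a1 a2 xc yc z by auto
    have "gamma_walk G x y 2" unfolding gamma_walk_def
      by (rule exI[of _ "[x, z, y]"]) (use v a1 a2 in auto)
    then show ?thesis unfolding gamma_dist_le_def using v by auto
  next
    case False
    then have "?P \<subseteq> ?X \<union> ?Y" by blast
    then have "card ?P \<le> card (?X \<union> ?Y)" by (rule card_mono[OF fXY])
    then have c: "card (?X \<union> ?Y) \<ge> 3" using cP by linarith
    show ?thesis
    proof (cases "x = y")
      case False
      have a: "gamma_adj G x y" "gamma_adj G y x" using adjs[OF xc yc False c] by auto
      have v: "x \<in> gamma_vertices G" "y \<in> gamma_vertices G"
        unfolding gamma_vertices_def using a xc yc by auto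
      have "gamma_walk G x y 1" unfolding gamma_walk_def
        by (rule exI[of _ "[x, y]"]) (use v a in auto)
      then show ?thesis unfolding gamma_dist_le_def using v by (auto intro!: exI[of _ "1::nat"])
    next
      case True
      have p1: "pd (ord \<one>\<^bsub>G\<^esub>) = {}" unfolding pd_def by (auto simp: prime_gt_1_nat)
      have "ord x \<noteq> 1"
      proof
        assume "ord x = 1"
        then have "?X = {}" using p1 by simp
        then show False using cX by simp
      qed
      then have x1: "x \<noteq> \<one>\<^bsub>G\<^esub>" by auto
      have c3: "3 \<le> card (pd (ord x) \<union> pd (ord \<one>\<^bsub>G\<^esub>))" using c True p1 by simp
      have a: "gamma_adj G x \<one>\<^bsub>G\<^esub>" using adjs[OF xc one_closed x1 c3] by auto
      have v: "x \<in> gamma_vertices G" unfolding gamma_vertices_def using a xc by auto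
      have "gamma_walk G x y 0" unfolding gamma_walk_def
        by (rule exI[of _ "[x]"]) (use True v in auto)
      then show ?thesis unfolding gamma_dist_le_def using v True by auto
    qed
  qed
qed

end
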